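(* Work in $\mathsf{ZF}+\mathsf{WA}_0$. Let $\kappa_0=\kappa$ be the critical point of $j$ and $\kappa_{n+1}=j(\kappa_n)$. If the critical sequence $\langle\kappa_n\mid n\in\omega\rangle$ is cofinal in the ordinals, then $\kappa$ is extendible: for every ordinal $\eta$ there is an elementary embedding $k:V_{\kappa+\eta}\to V_\theta$ for some $\theta$, with critical point $\kappa$ and $\eta<k(\kappa)$ (namely $k=j^n\restriction V_{\kappa+\eta}$ for suitable $n$).
   Context: $\mathsf{WA}_0$ (Wholeness axiom for $\Delta_0$-formulas), in the language $\{\in,j\}$ with $j$ a unary function symbol: $j$ is elementary ($\phi(\vec x)\leftrightarrow\phi(j(\vec x))$ for every $\in$-formula $\phi$), $j$ is non-trivial, and Separation holds for $\Delta_0$-formulas of the extended language $\{\in,j\}$. The critical point of $j$ is the least ordinal $\kappa$ with $j(\kappa)\neq\kappa$. The critical sequence is cofinal if for every ordinal $\alpha$ there is $n$ with $\alpha<\kappa_n$. *)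

theory Defs
  imports Main
begin

text \<open>A model of set theory is represented by a carrier type 'a, a membership
relation E (E x y means x \<in> y) and an interpretation j of the unary
function symbol. Variables are natural numbers.\<close>

datatype trm = Var nat | J trm

datatype fm =
    Mem trm trm
  | Eq trm trm
  | Neg fm
  | Conj fm fm
  | Ex nat fm

fun trm_jfree :: "trm \<Rightarrow> bool" where
  "trm_jfree (Var n) = True"
| "trm_jfree (J t) = False"

fun fm_jfree :: "fm \<Rightarrow> bool" where
  "fm_jfree (Mem s t) = (trm_jfree s \<and> trm_jfree t)"
| "fm_jfree (Eq s t) = (trm_jfree s \<and> trm_jfree t)"
| "fm_jfree (Neg p) = fm_jfree p"
| "fm_jfree (Conj p q) = (fm_jfree p \<and> fm_jfree q)"
| "fm_jfree (Ex x p) = fm_jfree p"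

fun delta0 :: "fm \<Rightarrow> bool" where
  "delta0 (Mem s t) = True"
| "delta0 (Eq s t) = True"
| "delta0 (Neg p) = delta0 p"
| "delta0 (Conj p q) = (delta0 p \<and> delta0 q)"
| "delta0 (Ex x (Conj (Mem (Var x') (Var y)) p)) = (x' = x \<and> y \<noteq> x \<and> delta0 p)"
| "delta0 (Ex x p) = False"

fun evalt :: "('a \<Rightarrow> 'a) \<Rightarrow> (nat \<Rightarrow> 'a) \<Rightarrow> trm \<Rightarrow> 'a" where
  "evalt j s (Var n) = s n"
| "evalt j s (J t) = j (evalt j s t)"

fun satD :: "('a \<Rightarrow> 'a \<Rightarrow> bool) \<Rightarrow> ('a \<Rightarrow> 'a) \<Rightarrow> ('a \<Rightarrow> bool) \<Rightarrow> (nat \<Rightarrow> 'a) \<Rightarrow> fm \<Rightarrow> bool" where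
  "satD E j D s (Mem a b) = E (evalt j s a) (evalt j s b)"
| "satD E j D s (Eq a b) = (evalt j s a = evalt j s b)"
| "satD E j D s (Neg p) = (\<not> satD E j D s p)"
| "satD E j D s (Conj p q) = (satD E j D s p \<and> satD E j D s q)"
| "satD E j D s (Ex x p) = (\<exists>a. D a \<and> satD E j D (s(x := a)) p)"

definition sat :: "('a \<Rightarrow> 'a \<Rightarrow> bool) \<Rightarrow> ('a \<Rightarrow> 'a) \<Rightarrow> (nat \<Rightarrow> 'a) \<Rightarrow> fm \<Rightarrow> bool" where
  "sat E j s p = satD E j (\<lambda>_. True) s p"

definition ZF :: "('a \<Rightarrow> 'a \<Rightarrow> bool) \<Rightarrow> bool" where
  "ZF E \<longleftrightarrow>
     \<comment> \<open>Extensionality\<close>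
     (\<forall>x y. (\<forall>z. E z x \<longleftrightarrow> E z y) \<longrightarrow> x = y)
     \<comment> \<open>Foundation\<close>
   \<and> (\<forall>x. (\<exists>y. E y x) \<longrightarrow> (\<exists>y. E y x \<and> \<not> (\<exists>z. E z y \<and> E z x)))
     \<comment> \<open>Pairing\<close>
   \<and> (\<forall>x y. \<exists>p. \<forall>z. E z p \<longleftrightarrow> (z = x \<or> z = y))
     \<comment> \<open>Union\<close>
   \<and> (\<forall>x. \<exists>u. \<forall>z. E z u \<longleftrightarrow> (\<exists>y. E y x \<and> E z y))
     \<comment> \<open>Power set\<close>
   \<and> (\<forall>x. \<exists>p. \<forall>z. E z p \<longleftrightarrow> (\<forall>w. E w z \<longrightarrow> E w x))
     \<comment> \<open>Infinity\<close>
   \<and> (\<exists>I. (\<exists>e. E e I \<and> (\<forall>w. \<not> E w e)) \<and>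
          (\<forall>x. E x I \<longrightarrow> (\<exists>y. E y I \<and> (\<forall>w. E w y \<longleftrightarrow> (E w x \<or> w = x)))))
     \<comment> \<open>Separation scheme for \<in>-formulas (variable 0 is the separated variable,
         the other variables are parameters)\<close>
   \<and> (\<forall>p s a. fm_jfree p \<longrightarrow>
        (\<exists>b. \<forall>x. E x b \<longleftrightarrow> (E x a \<and> sat E id (s(0 := x)) p)))
     \<comment> \<open>Replacement scheme for \<in>-formulas (variables 0, 1 are x, y)\<close>
   \<and> (\<forall>p s a. fm_jfree p \<longrightarrow>
        (\<forall>x. E x a \<longrightarrow> (\<exists>!y. sat E id (s(0 := x, 1 := y)) p)) \<longrightarrow>
        (\<exists>b. \<forall>y. E y b \<longleftrightarrow> (\<exists>x. E x a \<and> sat E id (s(0 := x, 1 := y)) p)))"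

definition WA0 :: "('a \<Rightarrow> 'a \<Rightarrow> bool) \<Rightarrow> ('a \<Rightarrow> 'a) \<Rightarrow> bool" where
  "WA0 E j \<longleftrightarrow>
     (\<forall>p s. fm_jfree p \<longrightarrow> (sat E j s p \<longleftrightarrow> sat E j (j \<circ> s) p))
   \<and> (\<exists>x. j x \<noteq> x)
   \<and> (\<forall>p s a. delta0 p \<longrightarrow>
        (\<exists>b. \<forall>x. E x b \<longleftrightarrow> (E x a \<and> sat E j (s(0 := x)) p)))"

definition upair :: "('a \<Rightarrow> 'a \<Rightarrow> bool) \<Rightarrow> 'a \<Rightarrow> 'a \<Rightarrow> 'a \<Rightarrow> bool" where
  "upair E z x y \<longleftrightarrow> (\<forall>w. E w z \<longleftrightarrow> (w = x \<or> w = y))"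

definition kpair :: "('a \<Rightarrow> 'a \<Rightarrow> bool) \<Rightarrow> 'a \<Rightarrow> 'a \<Rightarrow> 'a \<Rightarrow> bool" where
  "kpair E p x y \<longleftrightarrow> (\<exists>a b. upair E a x x \<and> upair E b x y \<and> upair E p a b)"

definition is_function :: "('a \<Rightarrow> 'a \<Rightarrow> bool) \<Rightarrow> 'a \<Rightarrow> 'a \<Rightarrow> bool" where
  "is_function E f A \<longleftrightarrow>
     (\<forall>p. E p f \<longrightarrow> (\<exists>x y. kpair E p x y \<and> E x A))
   \<and> (\<forall>x. E x A \<longrightarrow> (\<exists>!y. \<exists>p. E p f \<and> kpair E p x y))"

definition app :: "('a \<Rightarrow> 'a \<Rightarrow> bool) \<Rightarrow> 'a \<Rightarrow> 'a \<Rightarrow> 'a" where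
  "app E f x = (THE y. \<exists>p. E p f \<and> kpair E p x y)"

definition fun_into :: "('a \<Rightarrow> 'a \<Rightarrow> bool) \<Rightarrow> 'a \<Rightarrow> 'a \<Rightarrow> 'a \<Rightarrow> bool" where
  "fun_into E f A B \<longleftrightarrow> is_function E f A \<and> (\<forall>x. E x A \<longrightarrow> E (app E f x) B)"

definition subset :: "('a \<Rightarrow> 'a \<Rightarrow> bool) \<Rightarrow> 'a \<Rightarrow> 'a \<Rightarrow> bool" where
  "subset E x y \<longleftrightarrow> (\<forall>z. E z x \<longrightarrow> E z y)"

definition transitive :: "('a \<Rightarrow> 'a \<Rightarrow> bool) \<Rightarrow> 'a \<Rightarrow> bool" where
  "transitive E x \<longleftrightarrow> (\<forall>y. E y x \<longrightarrow> subset E y x)"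

text \<open>von Neumann ordinals (in the presence of Foundation).\<close>
definition Ord :: "('a \<Rightarrow> 'a \<Rightarrow> bool) \<Rightarrow> 'a \<Rightarrow> bool" where
  "Ord E a \<longleftrightarrow> transitive E a \<and> (\<forall>x. E x a \<longrightarrow> transitive E x)"

definition is_succ :: "('a \<Rightarrow> 'a \<Rightarrow> bool) \<Rightarrow> 'a \<Rightarrow> 'a \<Rightarrow> bool" where
  "is_succ E s a \<longleftrightarrow> (\<forall>w. E w s \<longleftrightarrow> (E w a \<or> w = a))"

text \<open>v = V_\<alpha>, defined by internal recursion V_\<beta> = \<Union>_{\<gamma><\<beta>} P(V_\<gamma>).\<close>
definition is_V :: "('a \<Rightarrow> 'a \<Rightarrow> bool) \<Rightarrow> 'a \<Rightarrow> 'a \<Rightarrow> bool" where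
  "is_V E \<alpha> v \<longleftrightarrow> Ord E \<alpha> \<and>
     (\<exists>f s. is_succ E s \<alpha> \<and> is_function E f s \<and> v = app E f \<alpha> \<and>
        (\<forall>\<beta>. E \<beta> s \<longrightarrow>
           (\<forall>x. E x (app E f \<beta>) \<longleftrightarrow> (\<exists>\<gamma>. E \<gamma> \<beta> \<and> subset E x (app E f \<gamma>)))))"

definition Vset :: "('a \<Rightarrow> 'a \<Rightarrow> bool) \<Rightarrow> 'a \<Rightarrow> 'a" where
  "Vset E \<alpha> = (THE v. is_V E \<alpha> v)"

text \<open>c = a + b (ordinal addition), by internal recursion a + \<beta> = a \<union> {a + \<gamma> | \<gamma> < \<beta>}.\<close>
definition is_oadd :: "('a \<Rightarrow> 'a \<Rightarrow> bool) \<Rightarrow> 'a \<Rightarrow> 'a \<Rightarrow> 'a \<Rightarrow> bool" where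
  "is_oadd E a b c \<longleftrightarrow> Ord E a \<and> Ord E b \<and>
     (\<exists>f s. is_succ E s b \<and> is_function E f s \<and> c = app E f b \<and>
        (\<forall>\<beta>. E \<beta> s \<longrightarrow>
           (\<forall>x. E x (app E f \<beta>) \<longleftrightarrow> (E x a \<or> (\<exists>\<gamma>. E \<gamma> \<beta> \<and> x = app E f \<gamma>)))))"

definition oadd :: "('a \<Rightarrow> 'a \<Rightarrow> bool) \<Rightarrow> 'a \<Rightarrow> 'a \<Rightarrow> 'a" where
  "oadd E a b = (THE c. is_oadd E a b c)"

definition is_crit :: "('a \<Rightarrow> 'a \<Rightarrow> bool) \<Rightarrow> ('a \<Rightarrow> 'a) \<Rightarrow> 'a \<Rightarrow> bool" where
  "is_crit E j \<kappa> \<longleftrightarrow> Ord E \<kappa> \<and> j \<kappa> \<noteq> \<kappa> \<and> (\<forall>\<gamma>. E \<gamma> \<kappa> \<longrightarrow> j \<gamma> = \<gamma>)"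

definition elem_emb :: "('a \<Rightarrow> 'a \<Rightarrow> bool) \<Rightarrow> 'a \<Rightarrow> 'a \<Rightarrow> 'a \<Rightarrow> bool" where
  "elem_emb E k A B \<longleftrightarrow> fun_into E k A B \<and>
     (\<forall>p s. fm_jfree p \<longrightarrow> (\<forall>i. E (s i) A) \<longrightarrow>
        (satD E id (\<lambda>x. E x A) s p \<longleftrightarrow> satD E id (\<lambda>x. E x B) (\<lambda>i. app E k (s i)) p))"

definition crit_emb :: "('a \<Rightarrow> 'a \<Rightarrow> bool) \<Rightarrow> 'a \<Rightarrow> 'a \<Rightarrow> bool" where
  "crit_emb E k \<kappa> \<longleftrightarrow> Ord E \<kappa> \<and> app E k \<kappa> \<noteq> \<kappa> \<and> (\<forall>\<gamma>. E \<gamma> \<kappa> \<longrightarrow> app E k \<gamma> = \<gamma>)"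

definition extendible :: "('a \<Rightarrow> 'a \<Rightarrow> bool) \<Rightarrow> 'a \<Rightarrow> bool" where
  "extendible E \<kappa> \<longleftrightarrow>
     (\<forall>\<eta>. Ord E \<eta> \<and> (\<exists>x. E x \<eta>) \<longrightarrow>
        (\<exists>k \<theta>. Ord E \<theta> \<and> elem_emb E k (Vset E (oadd E \<kappa> \<eta>)) (Vset E \<theta>)
              \<and> crit_emb E k \<kappa> \<and> E \<eta> (app E k \<kappa>)))"

end

theory Submission
  imports Defs
begin

locale zf = fixes E :: "'a \<Rightarrow> 'a \<Rightarrow> bool" assumes ZF: "ZF E"
begin

lemmas ZFD = ZF[unfolded ZF_def]
lemma ax_ext: "\<forall>x y. (\<forall>z. E z x \<longleftrightarrow> E z y) \<longrightarrow> x = y" using ZFD by (rule conjunct1)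
lemma ax_found: "\<forall>x. (\<exists>y. E y x) \<longrightarrow> (\<exists>y. E y x \<and> \<not> (\<exists>z. E z y \<and> E z x))" using ZFD[THEN conjunct2] by (rule conjunct1)
lemma ax_pair: "\<forall>x y. \<exists>p. \<forall>z. E z p \<longleftrightarrow> (z = x \<or> z = y)" using ZFD[THEN conjunct2, THEN conjunct2] by (rule conjunct1)
lemma ax_union: "\<forall>x. \<exists>u. \<forall>z. E z u \<longleftrightarrow> (\<exists>y. E y x \<and> E z y)" using ZFD[THEN conjunct2, THEN conjunct2, THEN conjunct2] by (rule conjunct1)
lemma ax_power: "\<forall>x. \<exists>p. \<forall>z. E z p \<longleftrightarrow> (\<forall>w. E w z \<longrightarrow> E w x)" using ZFD[THEN conjunct2, THEN conjunct2, THEN conjunct2, THEN conjunct2] by (rule conjunct1)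
lemma ax_sep: "\<forall>p s a. fm_jfree p \<longrightarrow>
        (\<exists>b. \<forall>x. E x b \<longleftrightarrow> (E x a \<and> sat E id (s(0 := x)) p))" using ZFD[THEN conjunct2, THEN conjunct2, THEN conjunct2, THEN conjunct2, THEN conjunct2, THEN conjunct2] by (rule conjunct1)
lemma ax_repl: "\<forall>p s a. fm_jfree p \<longrightarrow>
        (\<forall>x. E x a \<longrightarrow> (\<exists>!y. sat E id (s(0 := x, 1 := y)) p)) \<longrightarrow>
        (\<exists>b. \<forall>y. E y b \<longleftrightarrow> (\<exists>x. E x a \<and> sat E id (s(0 := x, 1 := y)) p))" using ZFD[THEN conjunct2, THEN conjunct2, THEN conjunct2, THEN conjunct2, THEN conjunct2, THEN conjunct2] by (rule conjunct2)

lemma extn: assumes "\<And>z. E z x \<longleftrightarrow> E z y" shows "x = y"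
  using ax_ext assms by blast

lemma found: "E y x \<Longrightarrow> \<exists>y. E y x \<and> (\<forall>z. E z y \<longrightarrow> \<not> E z x)"
  using ax_found by blast

lemma pairing: "\<exists>p. \<forall>z. E z p \<longleftrightarrow> z = x \<or> z = y"
  using ax_pair by blast

lemma union: "\<exists>u. \<forall>z. E z u \<longleftrightarrow> (\<exists>y. E y x \<and> E z y)"
  using ax_union by blast

lemma power: "\<exists>p. \<forall>z. E z p \<longleftrightarrow> subset E z x"
  using ax_power unfolding subset_def by blast

lemma sep: "fm_jfree p \<Longrightarrow> \<exists>b. \<forall>x. E x b \<longleftrightarrow> E x a \<and> sat E id (s(0:=x)) p"
  using ax_sep by blast

lemma repl: "fm_jfree p \<Longrightarrow> (\<forall>x. E x a \<longrightarrow> (\<exists>!y. sat E id (s(0 := x, 1 := y)) p)) \<Longrightarrow>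
        (\<exists>b. \<forall>y. E y b \<longleftrightarrow> (\<exists>x. E x a \<and> sat E id (s(0 := x, 1 := y)) p))"
  using ax_repl by blast

lemma no_self: "\<not> E x x"
proof
  assume h: "E x x"
  obtain p where p: "\<forall>z. E z p \<longleftrightarrow> z = x \<or> z = x" using pairing by blast
  have "E x p" using p by simp
  then obtain y where "E y p" "\<forall>z. E z y \<longrightarrow> \<not> E z p" using found by blast
  then show False using p h by auto
qed

lemma no_2cycle: "E x y \<Longrightarrow> \<not> E y x"
proof
  assume h: "E x y" "E y x"
  obtain p where p: "\<forall>z. E z p \<longleftrightarrow> z = x \<or> z = y" using pairing by blast
  have "E x p" using p by simp
  then obtain w where "E w p" "\<forall>z. E z w \<longrightarrow> \<not> E z p" using found by blast
  then show False using p h by auto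
qed

lemma upair_ex: "\<exists>z. upair E z x y"
  using pairing unfolding upair_def by blast

lemma upair_uniq: "upair E z x y \<Longrightarrow> upair E z' x y \<Longrightarrow> z = z'"
  unfolding upair_def by (rule extn) blast

lemma kpair_ex: "\<exists>p. kpair E p x y"
proof -
  obtain a b where "upair E a x x" "upair E b x y" using upair_ex by blast
  moreover obtain p where "upair E p a b" using upair_ex by blast
  ultimately show ?thesis unfolding kpair_def by blast
qed

lemma kpair_uniq: assumes "kpair E p x y" "kpair E p' x y" shows "p = p'"
proof -
  obtain a b where ab: "upair E a x x" "upair E b x y" "upair E p a b" using assms(1) unfolding kpair_def by blast
  obtain a' b' where ab': "upair E a' x x" "upair E b' x y" "upair E p' a' b'" using assms(2) unfolding kpair_def by blast
  have "a = a'" using upair_uniq[OF ab(1) ab'(1)] .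
  moreover have "b = b'" using upair_uniq[OF ab(2) ab'(2)] .
  ultimately show ?thesis using upair_uniq[OF ab(3)] ab'(3) by simp
qed

lemma kpair_inj: assumes "kpair E p x y" "kpair E p x' y'" shows "x = x' \<and> y = y'"
proof -
  obtain a b where ab: "upair E a x x" "upair E b x y" "upair E p a b" using assms(1) unfolding kpair_def by blast
  obtain a' b' where ab': "upair E a' x' x'" "upair E b' x' y'" "upair E p a' b'" using assms(2) unfolding kpair_def by blast
  have mem: "\<And>z u v w. upair E z u v \<Longrightarrow> E w z \<longleftrightarrow> w = u \<or> w = v" unfolding upair_def by blast
  have a1: "E w a \<longleftrightarrow> w = x" for w using mem[OF ab(1), of w] by blast
  have b1: "E w b \<longleftrightarrow> w = x \<or> w = y" for w using mem[OF ab(2), of w] by blast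
  have p1: "E w p \<longleftrightarrow> w = a \<or> w = b" for w using mem[OF ab(3), of w] by blast
  have a2: "E w a' \<longleftrightarrow> w = x'" for w using mem[OF ab'(1), of w] by blast
  have b2: "E w b' \<longleftrightarrow> w = x' \<or> w = y'" for w using mem[OF ab'(2), of w] by blast
  have p2: "E w p \<longleftrightarrow> w = a' \<or> w = b'" for w using mem[OF ab'(3), of w] by blast
  have "a = a' \<or> a = b'" using p1[of a] p2[of a] by blast
  then have xx: "x = x'"
  proof
    assume "a = a'" then show ?thesis using a1[of x] a2[of x] by blast
  next
    assume "a = b'" then show ?thesis using a1[of x'] b2[of x'] by blast
  qed
  have "b = a' \<or> b = b'" using p1[of b] p2[of b] by blast
  then have "y = y'"
  proof
    assume h: "b = b'"
    have "y = x' \<or> y = y'" using b1[of y] b2[of y] h by blast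
    moreover have "y' = x \<or> y' = y" using b1[of y'] b2[of y'] h by blast
    ultimately show ?thesis using xx by blast
  next
    assume h: "b = a'"
    then have yx: "y = x" using b1[of y] a2[of y] xx by blast
    have "b' = a \<or> b' = b" using p1[of b'] p2[of b'] by blast
    moreover have "E y' b'" using b2 by blast
    ultimately show ?thesis using a1[of y'] b1[of y'] yx by blast
  qed
  with xx show ?thesis by blast
qed

end

definition "fOr p q = Neg (Conj (Neg p) (Neg q))"
definition "fImp p q = Neg (Conj p (Neg q))"
definition "fIff p q = Conj (fImp p q) (fImp q p)"
definition "fAll x p = Neg (Ex x (Neg p))"
definition "fBex x y p = Ex x (Conj (Mem (Var x) (Var y)) p)"
definition "fBall x y p = Neg (fBex x y (Neg p))"
definition "fMem i k = Mem (Var i) (Var k)"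
definition "fEq i k = Eq (Var i) (Var k)"

lemma sat_simps[simp]:
  "sat E j t (Neg p) = (\<not> sat E j t p)"
  "sat E j t (Conj p q) = (sat E j t p \<and> sat E j t q)"
  "sat E j t (Ex x p) = (\<exists>a. sat E j (t(x:=a)) p)"
  "sat E j t (fOr p q) = (sat E j t p \<or> sat E j t q)"
  "sat E j t (fImp p q) = (sat E j t p \<longrightarrow> sat E j t q)"
  "sat E j t (fIff p q) = (sat E j t p \<longleftrightarrow> sat E j t q)"
  "sat E j t (fAll x p) = (\<forall>a. sat E j (t(x:=a)) p)"
  "sat E j t (fBex x y p) = (\<exists>a. E a ((t(x:=a)) y) \<and> sat E j (t(x:=a)) p)"
  "sat E j t (fBall x y p) = (\<forall>a. E a ((t(x:=a)) y) \<longrightarrow> sat E j (t(x:=a)) p)"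
  "sat E j t (fMem i k) = E (t i) (t k)"
  "sat E j t (fEq i k) = (t i = t k)"
  by (auto simp: sat_def fOr_def fImp_def fIff_def fAll_def fBex_def fBall_def fMem_def fEq_def)

lemma jfree_simps[simp]:
  "fm_jfree (fOr p q) = (fm_jfree p \<and> fm_jfree q)"
  "fm_jfree (fImp p q) = (fm_jfree p \<and> fm_jfree q)"
  "fm_jfree (fIff p q) = (fm_jfree p \<and> fm_jfree q)"
  "fm_jfree (fAll x p) = fm_jfree p"
  "fm_jfree (fBex x y p) = fm_jfree p"
  "fm_jfree (fBall x y p) = fm_jfree p"
  "fm_jfree (fMem i k)"
  "fm_jfree (fEq i k)"
  by (auto simp: fOr_def fImp_def fIff_def fAll_def fBex_def fBall_def fMem_def fEq_def)


lemma sat_raw[simp]: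
  "sat E j t (Mem a b) = E (evalt j t a) (evalt j t b)"
  "sat E j t (Eq a b) = (evalt j t a = evalt j t b)"
  by (auto simp: sat_def)

definition "fUpair z x y m = fAll m (fIff (fMem m z) (fOr (fEq m x) (fEq m y)))"
definition "fKpair p x y m = Ex m (Ex (Suc m) (Conj (fUpair m x x (m+2)) (Conj (fUpair (Suc m) x y (m+2)) (fUpair p m (Suc m) (m+2)))))"
definition "fMemApp x f b m = Ex m (Conj (Ex (Suc m) (Conj (fMem (Suc m) f) (fKpair (Suc m) b m (m+2)))) (fMem x m))"
definition "fSubset x y m = fBall m x (fMem m y)"
definition "fTrans x m = fBall m x (fSubset m x (Suc m))"
definition "fOrd x m = Conj (fTrans x m) (fBall m x (fTrans m (Suc m)))"
definition "fSucc s a m = fAll m (fIff (fMem m s) (fOr (fMem m a) (fEq m a)))"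
definition "fFunction f s m = Conj
   (fBall m f (Ex (Suc m) (Ex (m+2) (Conj (fKpair m (Suc m) (m+2) (m+3)) (fMem (Suc m) s)))))
   (fBall m s (Ex (Suc m) (Conj (Ex (m+2) (Conj (fMem (m+2) f) (fKpair (m+2) m (Suc m) (m+3))))
        (fAll (m+3) (fImp (Ex (m+2) (Conj (fMem (m+2) f) (fKpair (m+2) m (m+3) (m+4)))) (fEq (m+3) (Suc m)))))))"

lemma jfree_b[simp]: "fm_jfree (fUpair z x y m)" "fm_jfree (fKpair p x y m)" "fm_jfree (fMemApp x f b m)"
  "fm_jfree (fSubset x y m)" "fm_jfree (fTrans x m)" "fm_jfree (fOrd x m)" "fm_jfree (fSucc s a m)"
  "fm_jfree (fFunction f s m)"
  by (simp_all add: fUpair_def fKpair_def fMemApp_def fSubset_def fTrans_def fOrd_def fSucc_def fFunction_def)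

lemma sat_fUpair[simp]: "z < m \<Longrightarrow> x < m \<Longrightarrow> y < m \<Longrightarrow> sat E j t (fUpair z x y m) = upair E (t z) (t x) (t y)"
  by (simp add: fUpair_def upair_def)

lemma sat_fKpair[simp]: "p < m \<Longrightarrow> x < m \<Longrightarrow> y < m \<Longrightarrow> sat E j t (fKpair p x y m) = kpair E (t p) (t x) (t y)"
  by (simp add: fKpair_def kpair_def)

definition memapp :: "('a \<Rightarrow> 'a \<Rightarrow> bool) \<Rightarrow> 'a \<Rightarrow> 'a \<Rightarrow> 'a \<Rightarrow> bool" where
  "memapp E f b x \<longleftrightarrow> (\<exists>y. (\<exists>p. E p f \<and> kpair E p b y) \<and> E x y)"

lemma sat_fMemApp[simp]: "x < m \<Longrightarrow> f < m \<Longrightarrow> b < m \<Longrightarrow> sat E j t (fMemApp x f b m) = memapp E (t f) (t b) (t x)"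
  by (simp add: fMemApp_def memapp_def)

lemma sat_fSubset[simp]: "x < m \<Longrightarrow> y < m \<Longrightarrow> sat E j t (fSubset x y m) = subset E (t x) (t y)"
  by (simp add: fSubset_def subset_def)

lemma sat_fTrans[simp]: "x < m \<Longrightarrow> sat E j t (fTrans x m) = transitive E (t x)"
  by (simp add: fTrans_def transitive_def)

lemma sat_fOrd[simp]: "x < m \<Longrightarrow> sat E j t (fOrd x m) = Ord E (t x)"
  by (simp add: fOrd_def Ord_def)

lemma sat_fSucc[simp]: "s < m \<Longrightarrow> a < m \<Longrightarrow> sat E j t (fSucc s a m) = is_succ E (t s) (t a)"
  by (simp add: fSucc_def is_succ_def)

lemma sat_fFunction[simp]: "f < m \<Longrightarrow> s < m \<Longrightarrow> sat E j t (fFunction f s m) = is_function E (t f) (t s)"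
  unfolding fFunction_def is_function_def by (simp; blast)

context zf begin

definition funat :: "'a \<Rightarrow> 'a \<Rightarrow> bool" where
  "funat f b \<longleftrightarrow> (\<exists>!y. \<exists>p. E p f \<and> kpair E p b y)"

lemma app_ex: assumes "funat f b" shows "\<exists>p. E p f \<and> kpair E p b (app E f b)"
proof -
  from assms obtain y where "\<exists>p. E p f \<and> kpair E p b y" "\<forall>y'. (\<exists>p. E p f \<and> kpair E p b y') \<longrightarrow> y' = y"
    unfolding funat_def by blast
  then have "app E f b = y" unfolding app_def by (intro the_equality) blast+
  with \<open>\<exists>p. E p f \<and> kpair E p b y\<close> show ?thesis by simp
qed

lemma app_eq: assumes "funat f b" "E p f" "kpair E p b y" shows "app E f b = y"
proof -
  from assms(1) obtain y0 where "\<exists>p. E p f \<and> kpair E p b y0" "\<forall>y'. (\<exists>p. E p f \<and> kpair E p b y') \<longrightarrow> y' = y0"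
    unfolding funat_def by blast
  then have "app E f b = y0" unfolding app_def by (intro the_equality) blast+
  moreover have "y = y0" using assms(2,3) \<open>\<forall>y'. _ \<longrightarrow> y' = y0\<close> by blast
  ultimately show ?thesis by simp
qed

lemma memapp_app: assumes "funat f b" shows "memapp E f b x \<longleftrightarrow> E x (app E f b)"
  unfolding memapp_def using app_ex[OF assms] app_eq[OF assms] by blast

lemma fun_funat: "is_function E f s \<Longrightarrow> E b s \<Longrightarrow> funat f b"
  unfolding is_function_def funat_def by blast

lemma eps_ind:
  assumes tr: "transitive E S" and jf: "fm_jfree p"
    and df: "\<And>x. E x S \<Longrightarrow> sat E id (t(0:=x)) p \<longleftrightarrow> Q x"
    and step: "\<And>x. E x S \<Longrightarrow> (\<And>y. E y x \<Longrightarrow> Q y) \<Longrightarrow> Q x"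
    and xS: "E x S"
  shows "Q x"
proof (rule ccontr)
  assume nq: "\<not> Q x"
  obtain D where D: "\<forall>z. E z D \<longleftrightarrow> E z S \<and> sat E id (t(0:=z)) (Neg p)" using sep[where p="Neg p" and a=S and s=t] jf by auto
  have "E x D" using D df[OF xS] nq xS by simp
  then obtain m where m: "E m D" "\<forall>z. E z m \<longrightarrow> \<not> E z D" using found by blast
  have mS: "E m S" using m D by blast
  have "Q m"
  proof (rule step[OF mS])
    fix y assume "E y m"
    then have "E y S" using tr mS unfolding transitive_def subset_def by blast
    moreover have "\<not> E y D" using m \<open>E y m\<close> by blast
    ultimately show "Q y" using D df by auto
  qed
  then show False using m D df[OF mS] by simp
qed

lemma Ord_elem: "Ord E a \<Longrightarrow> E x a \<Longrightarrow> Ord E x"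
  unfolding Ord_def transitive_def subset_def by blast

lemma succ_ex: "\<exists>s. is_succ E s a"
proof -
  obtain p where p: "\<forall>z. E z p \<longleftrightarrow> z = a \<or> z = a" using pairing by blast
  obtain q where q: "\<forall>z. E z q \<longleftrightarrow> z = a \<or> z = p" using pairing by blast
  obtain u where u: "\<forall>z. E z u \<longleftrightarrow> (\<exists>y. E y q \<and> E z y)" using union by blast
  have p': "E z p \<longleftrightarrow> z = a" for z using p by simp
  have "E w u \<longleftrightarrow> (E w a \<or> E w p)" for w using u q by auto
  then have "\<forall>w. E w u \<longleftrightarrow> (E w a \<or> w = a)" using p' by simp
  then show ?thesis unfolding is_succ_def by (rule exI)
qed

lemma succ_uniq: "is_succ E s a \<Longrightarrow> is_succ E s' a \<Longrightarrow> s = s'"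
  unfolding is_succ_def by (intro extn) simp

lemma succ_trans: "is_succ E s a \<Longrightarrow> transitive E a \<Longrightarrow> transitive E s"
  unfolding is_succ_def transitive_def subset_def by blast

lemma succ_mem: "is_succ E s a \<Longrightarrow> E a s"
  unfolding is_succ_def by blast

lemma succ_Ord: "is_succ E s a \<Longrightarrow> Ord E a \<Longrightarrow> Ord E s"
  unfolding is_succ_def Ord_def transitive_def subset_def by blast

lemma binunion: "\<exists>u. \<forall>z. E z u \<longleftrightarrow> E z x \<or> E z y"
proof -
  obtain q where q: "\<forall>z. E z q \<longleftrightarrow> z = x \<or> z = y" using pairing by blast
  obtain u where u: "\<forall>z. E z u \<longleftrightarrow> (\<exists>w. E w q \<and> E z w)" using union by blast
  have "E z u \<longleftrightarrow> E z x \<or> E z y" for z using q u by auto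
  then show ?thesis by blast
qed

end

locale zfrec = zf E for E :: "'a \<Rightarrow> 'a \<Rightarrow> bool" +
  fixes Phi :: "'a \<Rightarrow> ('a \<Rightarrow> 'a) \<Rightarrow> 'a \<Rightarrow> bool" and a :: 'a and ph :: fm
  assumes loc: "(\<And>\<gamma>. E \<gamma> \<beta> \<Longrightarrow> F \<gamma> = G \<gamma>) \<Longrightarrow> Phi \<beta> F x = Phi \<beta> G x"
  and ph_jf: "fm_jfree ph"
  and PH: "t 20 = a \<Longrightarrow> (\<And>\<gamma>. E \<gamma> (t 11) \<Longrightarrow> funat (t 12) \<gamma>) \<Longrightarrow> sat E id t ph = Phi (t 11) (app E (t 12)) (t 10)"
  and bound: "(\<And>\<gamma>. E \<gamma> \<beta> \<Longrightarrow> funat g \<gamma>) \<Longrightarrow> \<exists>B. \<forall>x. Phi \<beta> (app E g) x \<longrightarrow> E x B"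
begin

definition recfun :: "'a \<Rightarrow> 'a \<Rightarrow> bool" where
  "recfun f s \<longleftrightarrow> is_function E f s \<and> (\<forall>\<beta>. E \<beta> s \<longrightarrow> (\<forall>x. E x (app E f \<beta>) \<longleftrightarrow> Phi \<beta> (app E f) x))"

definition "fRec = fBall 11 13 (fAll 10 (fIff (fMemApp 10 12 11 30) ph))"
definition "fWit d = Ex 12 (Ex 13 (Conj (fSucc 13 d 30) (Conj (fFunction 12 13 30) fRec)))"
definition "fWitV d v = Ex 12 (Ex 13 (Conj (fSucc 13 d 30) (Conj (fFunction 12 13 30)
   (Conj fRec (fAll 10 (fIff (fMem 10 v) (fMemApp 10 12 d 30)))))))"

lemma jf_rec[simp]: "fm_jfree fRec" "fm_jfree (fWit d)" "fm_jfree (fWitV d v)"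
  using ph_jf by (simp_all add: fRec_def fWit_def fWitV_def)

lemma sat_fRec:
  assumes "is_function E (t 12) (t 13)" "transitive E (t 13)" "t 20 = a"
  shows "sat E id t fRec \<longleftrightarrow> recfun (t 12) (t 13)"
proof -
  have "sat E id t fRec \<longleftrightarrow> (\<forall>\<beta>. E \<beta> (t 13) \<longrightarrow> (\<forall>x. memapp E (t 12) \<beta> x \<longleftrightarrow> sat E id (t(11:=\<beta>, 10:=x)) ph))"
    by (simp add: fRec_def)
  also have "\<dots> \<longleftrightarrow> (\<forall>\<beta>. E \<beta> (t 13) \<longrightarrow> (\<forall>x. E x (app E (t 12) \<beta>) \<longleftrightarrow> Phi \<beta> (app E (t 12)) x))"
  proof (rule iff_allI, rule imp_cong[OF refl])
    fix \<beta> assume b: "E \<beta> (t 13)"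
    have fa: "funat (t 12) \<beta>" using fun_funat assms(1) b by blast
    have fg: "funat (t 12) \<gamma>" if "E \<gamma> \<beta>" for \<gamma>
      using fun_funat[OF assms(1)] assms(2) b that unfolding transitive_def subset_def by blast
    have *: "sat E id (t(11:=\<beta>, 10:=x)) ph = Phi \<beta> (app E (t 12)) x" for x
      using PH[of "t(11:=\<beta>, 10:=x)"] assms(3) fg by simp
    then show "(\<forall>x. memapp E (t 12) \<beta> x \<longleftrightarrow> sat E id (t(11:=\<beta>, 10:=x)) ph) \<longleftrightarrow>
       (\<forall>x. E x (app E (t 12) \<beta>) \<longleftrightarrow> Phi \<beta> (app E (t 12)) x)"
      using memapp_app[OF fa] * by simp
  qed
  finally show ?thesis using assms(1) unfolding recfun_def by simp
qed


lemma sat_fWit: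
  assumes "d < 10" "t 20 = a" "transitive E (t d)"
  shows "sat E id t (fWit d) \<longleftrightarrow> (\<exists>f s. is_succ E s (t d) \<and> recfun f s)"
proof -
  have "sat E id t (fWit d) \<longleftrightarrow> (\<exists>f s. is_succ E s (t d) \<and> is_function E f s \<and> sat E id (t(12:=f,13:=s)) fRec)"
    using assms(1) by (simp add: fWit_def)
  also have "\<dots> \<longleftrightarrow> (\<exists>f s. is_succ E s (t d) \<and> recfun f s)"
  proof (intro iff_exI)
    fix f s
    show "(is_succ E s (t d) \<and> is_function E f s \<and> sat E id (t(12:=f,13:=s)) fRec) \<longleftrightarrow> (is_succ E s (t d) \<and> recfun f s)"
    proof (cases "is_succ E s (t d) \<and> is_function E f s")
      case True
      then have "transitive E s" using succ_trans assms(3) by blast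
      then show ?thesis using sat_fRec[of "t(12:=f,13:=s)"] True assms(2) by (simp add: recfun_def)
    qed (auto simp: recfun_def)
  qed
  finally show ?thesis .
qed

lemma sat_fWitV:
  assumes "d < 10" "v < 10" "t 20 = a" "transitive E (t d)"
  shows "sat E id t (fWitV d v) \<longleftrightarrow> (\<exists>f s. is_succ E s (t d) \<and> recfun f s \<and> t v = app E f (t d))"
proof -
  have "sat E id t (fWitV d v) \<longleftrightarrow> (\<exists>f s. is_succ E s (t d) \<and> is_function E f s \<and> sat E id (t(12:=f,13:=s)) fRec
     \<and> (\<forall>x. E x (t v) \<longleftrightarrow> memapp E f (t d) x))"
    using assms(1,2) by (simp add: fWitV_def)
  also have "\<dots> \<longleftrightarrow> (\<exists>f s. is_succ E s (t d) \<and> recfun f s \<and> t v = app E f (t d))"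
  proof (intro iff_exI)
    fix f s
    show "(is_succ E s (t d) \<and> is_function E f s \<and> sat E id (t(12:=f,13:=s)) fRec \<and> (\<forall>x. E x (t v) \<longleftrightarrow> memapp E f (t d) x))
       \<longleftrightarrow> (is_succ E s (t d) \<and> recfun f s \<and> t v = app E f (t d))"
    proof (cases "is_succ E s (t d) \<and> is_function E f s")
      case True
      then have "transitive E s" using succ_trans assms(4) by blast
      have fa: "funat f (t d)" using True fun_funat succ_mem by blast
      have "(\<forall>x. E x (t v) \<longleftrightarrow> memapp E f (t d) x) \<longleftrightarrow> t v = app E f (t d)"
        using memapp_app[OF fa] extn by auto
      then show ?thesis using sat_fRec[of "t(12:=f,13:=s)"] True assms(3) \<open>transitive E s\<close> by (simp add: recfun_def)
    qed (auto simp: recfun_def)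
  qed
  finally show ?thesis .
qed

lemma agree:
  assumes r: "recfun f s" "recfun f' s'" and tr: "transitive E s" "transitive E s'"
    and b: "E \<beta> s" "E \<beta> s'"
  shows "app E f \<beta> = app E f' \<beta>"
proof -
  define t where "t = (\<lambda>_::nat. a)(1:=s', 2:=f, 3:=f')"
  define p where "p = fImp (fMem 0 1) (fAll 4 (fIff (fMemApp 4 2 0 30) (fMemApp 4 3 0 30)))"
  have ff: "is_function E f s" "is_function E f' s'" using r unfolding recfun_def by auto
  have "E \<beta> s' \<longrightarrow> app E f \<beta> = app E f' \<beta>"
  proof (rule eps_ind[where S=s and p=p and t=t and Q="\<lambda>\<beta>. E \<beta> s' \<longrightarrow> app E f \<beta> = app E f' \<beta>"])
    show "transitive E s" by fact
    show "fm_jfree p" by (simp add: p_def)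
    show "E \<beta> s" by fact
  next
    fix x assume x: "E x s"
    show "sat E id (t(0:=x)) p \<longleftrightarrow> (E x s' \<longrightarrow> app E f x = app E f' x)"
    proof (cases "E x s'")
      case True
      have "funat f x" "funat f' x" using fun_funat ff x True by blast+
      then show ?thesis using True memapp_app extn by (auto simp: p_def t_def)
    qed (simp add: p_def t_def)
  next
    fix x assume x: "E x s" and ih: "\<And>y. E y x \<Longrightarrow> E y s' \<longrightarrow> app E f y = app E f' y"
    show "E x s' \<longrightarrow> app E f x = app E f' x"
    proof
      assume x': "E x s'"
      have eq: "app E f y = app E f' y" if "E y x" for y
      proof -
        have "E y s'" using tr(2) x' that unfolding transitive_def subset_def by blast
        then show ?thesis using ih that by blast
      qed
      have "E z (app E f x) \<longleftrightarrow> E z (app E f' x)" for z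
      proof -
        have "E z (app E f x) \<longleftrightarrow> Phi x (app E f) z" using r(1) x unfolding recfun_def by blast
        also have "\<dots> \<longleftrightarrow> Phi x (app E f') z" using loc[of x "app E f" "app E f'"] eq by blast
        also have "\<dots> \<longleftrightarrow> E z (app E f' x)" using r(2) x' unfolding recfun_def by blast
        finally show ?thesis .
      qed
      then show "app E f x = app E f' x" by (rule extn)
    qed
  qed
  then show ?thesis using b by blast
qed

lemma uniq:
  assumes "transitive E \<alpha>" "is_succ E s \<alpha>" "recfun f s" "is_succ E s' \<alpha>" "recfun f' s'"
  shows "app E f \<alpha> = app E f' \<alpha>"
proof -
  have "s = s'" using succ_uniq assms by blast
  moreover have "transitive E s" using succ_trans assms by blast
  moreover have "E \<alpha> s" using succ_mem assms by blast
  ultimately show ?thesis using agree assms by blast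
qed


lemma step:
  assumes oa: "Ord E \<alpha>" and ih: "\<And>\<gamma>. E \<gamma> \<alpha> \<Longrightarrow> \<exists>f s. is_succ E s \<gamma> \<and> recfun f s"
  shows "\<exists>f s. is_succ E s \<alpha> \<and> recfun f s"
proof -
  have trA: "transitive E \<alpha>" using oa unfolding Ord_def by blast
  have inA: "E \<gamma> \<alpha>" if "E \<gamma> \<delta>" "E \<delta> \<alpha>" for \<gamma> \<delta>
    using trA that unfolding transitive_def subset_def by blast
  have trE: "transitive E \<delta>" if "E \<delta> \<alpha>" for \<delta> using oa that unfolding Ord_def by blast
  define R where "R \<delta> y \<longleftrightarrow> (\<exists>v. kpair E y \<delta> v \<and> (\<exists>f s. is_succ E s \<delta> \<and> recfun f s \<and> v = app E f \<delta>))" for \<delta> y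
  define pR where "pR = Ex 2 (Conj (fKpair 1 0 2 30) (fWitV 0 2))"
  define t0 where "t0 = (\<lambda>_::nat. a)"
  have satR: "sat E id (t0(0:=\<delta>, 1:=y)) pR \<longleftrightarrow> R \<delta> y" if "E \<delta> \<alpha>" for \<delta> y
  proof -
    have "sat E id (t0(0:=\<delta>, 1:=y)) pR \<longleftrightarrow> (\<exists>v. kpair E y \<delta> v \<and> sat E id (t0(0:=\<delta>, 1:=y, 2:=v)) (fWitV 0 2))"
      by (simp add: pR_def)
    also have "\<dots> \<longleftrightarrow> R \<delta> y"
      unfolding R_def using sat_fWitV[of 0 2 "t0(0:=\<delta>, 1:=y, 2:=_)"] trE[OF that] by (simp add: t0_def)
    finally show ?thesis .
  qed
  have wagree: "app E f \<delta> = app E f' \<delta>" if "E \<delta> \<alpha>" "is_succ E s \<delta>" "recfun f s" "is_succ E s' \<delta>" "recfun f' s'" for \<delta> f s f' s'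
    using uniq trE that by blast
  have Ru: "\<exists>!y. R \<delta> y" if d: "E \<delta> \<alpha>" for \<delta>
  proof -
    obtain f s where fs: "is_succ E s \<delta>" "recfun f s" using ih d by blast
    obtain y where "kpair E y \<delta> (app E f \<delta>)" using kpair_ex by blast
    then have "R \<delta> y" unfolding R_def using fs by blast
    moreover have "y' = y" if Ry: "R \<delta> y'" for y'
    proof -
      obtain f' s' where "kpair E y' \<delta> (app E f' \<delta>)" "is_succ E s' \<delta>" "recfun f' s'" using Ry unfolding R_def by blast
      then show ?thesis using wagree[OF d fs] kpair_uniq \<open>kpair E y \<delta> (app E f \<delta>)\<close> by metis
    qed
    ultimately show ?thesis by blast
  qed
  have "\<exists>g. \<forall>y. E y g \<longleftrightarrow> (\<exists>\<delta>. E \<delta> \<alpha> \<and> sat E id (t0(0 := \<delta>, 1 := y)) pR)"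
  proof (rule repl)
    show "fm_jfree pR" by (simp add: pR_def)
    show "\<forall>x. E x \<alpha> \<longrightarrow> (\<exists>!y. sat E id (t0(0 := x, 1 := y)) pR)" using Ru satR by simp
  qed
  then obtain g where g0: "\<forall>y. E y g \<longleftrightarrow> (\<exists>\<delta>. E \<delta> \<alpha> \<and> sat E id (t0(0 := \<delta>, 1 := y)) pR)" by blast
  have g: "\<forall>y. E y g \<longleftrightarrow> (\<exists>\<delta>. E \<delta> \<alpha> \<and> R \<delta> y)"
  proof
    fix y show "E y g \<longleftrightarrow> (\<exists>\<delta>. E \<delta> \<alpha> \<and> R \<delta> y)" using g0 satR by blast
  qed
  have G: "(\<exists>p. E p g \<and> kpair E p \<delta> (app E f \<delta>)) \<and> (\<forall>y. (\<exists>p. E p g \<and> kpair E p \<delta> y) \<longrightarrow> y = app E f \<delta>)"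
    if d: "E \<delta> \<alpha>" and fs: "is_succ E s \<delta>" "recfun f s" for \<delta> f s
  proof (intro conjI allI impI)
    obtain p where "kpair E p \<delta> (app E f \<delta>)" using kpair_ex by blast
    then show "\<exists>p. E p g \<and> kpair E p \<delta> (app E f \<delta>)" using g d fs unfolding R_def by blast
  next
    fix y assume "\<exists>p. E p g \<and> kpair E p \<delta> y"
    then obtain p where p: "E p g" "kpair E p \<delta> y" by blast
    then obtain \<delta>' f' s' where "E \<delta>' \<alpha>" "kpair E p \<delta>' (app E f' \<delta>')" "is_succ E s' \<delta>'" "recfun f' s'"
      using g unfolding R_def by blast
    then show "y = app E f \<delta>" using kpair_inj[OF p(2)] wagree[OF d fs] by metis
  qed
  have gfa: "funat g \<delta>" and gapp: "app E g \<delta> = app E f \<delta>"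
    if "E \<delta> \<alpha>" "is_succ E s \<delta>" "recfun f s" for \<delta> f s
  proof -
    show "funat g \<delta>" using G[OF that] unfolding funat_def by blast
    then show "app E g \<delta> = app E f \<delta>" using G[OF that] app_eq by blast
  qed
  have gfa': "funat g \<delta>" if "E \<delta> \<alpha>" for \<delta> using ih[OF that] gfa[OF that] by blast
  have gpairs: "\<exists>\<delta> v. kpair E p \<delta> v \<and> E \<delta> \<alpha>" if "E p g" for p using that g unfolding R_def by blast
  have coh: "app E f \<gamma> = app E g \<gamma>" if d: "E \<delta> \<alpha>" and fs: "is_succ E s \<delta>" "recfun f s" and gs: "E \<gamma> s" for \<delta> s f \<gamma>
  proof -
    have ga: "E \<gamma> \<alpha>" using gs fs(1) d inA unfolding is_succ_def by blast
    obtain f' s' where fs': "is_succ E s' \<gamma>" "recfun f' s'" using ih ga by blast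
    have "app E f \<gamma> = app E f' \<gamma>"
      using agree[OF fs(2) fs'(2) succ_trans[OF fs(1) trE[OF d]] succ_trans[OF fs'(1) trE[OF ga]] gs succ_mem[OF fs'(1)]] .
    also have "\<dots> = app E g \<gamma>" using gapp[OF ga fs'] by simp
    finally show ?thesis .
  qed
  obtain B where B: "\<forall>x. Phi \<alpha> (app E g) x \<longrightarrow> E x B" using bound gfa' by blast
  define pS where "pS = Ex 10 (Conj (fEq 10 0) ph)"
  define tS where "tS = t0(11:=\<alpha>, 12:=g)"
  have satS: "sat E id (tS(0:=x)) pS \<longleftrightarrow> Phi \<alpha> (app E g) x" for x
  proof -
    have "sat E id (tS(0:=x)) pS \<longleftrightarrow> sat E id (tS(0:=x, 10:=x)) ph" by (auto simp: pS_def)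
    also have "\<dots> \<longleftrightarrow> Phi \<alpha> (app E g) x" using PH[of "tS(0:=x, 10:=x)"] gfa' by (simp add: tS_def t0_def)
    finally show ?thesis .
  qed
  obtain w where w: "\<forall>x. E x w \<longleftrightarrow> E x B \<and> sat E id (tS(0:=x)) pS" using sep[where p=pS and a=B and s=tS] ph_jf
    by (auto simp: pS_def)
  have wE: "E x w \<longleftrightarrow> Phi \<alpha> (app E g) x" for x using w B satS by blast
  obtain q where q: "kpair E q \<alpha> w" using kpair_ex by blast
  obtain sq where sq: "\<forall>z. E z sq \<longleftrightarrow> z = q \<or> z = q" using pairing by blast
  obtain f where f: "\<forall>z. E z f \<longleftrightarrow> E z g \<or> E z sq" using binunion by blast
  have fE: "E z f \<longleftrightarrow> E z g \<or> z = q" for z using f sq by blast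
  obtain s where s: "is_succ E s \<alpha>" using succ_ex by blast
  have sE: "E z s \<longleftrightarrow> E z \<alpha> \<or> z = \<alpha>" for z using s unfolding is_succ_def by blast
  have nA: "\<not> E \<alpha> \<alpha>" by (rule no_self)
  have fA: "(\<exists>p. E p f \<and> kpair E p \<delta> (app E g \<delta>)) \<and> (\<forall>y. (\<exists>p. E p f \<and> kpair E p \<delta> y) \<longrightarrow> y = app E g \<delta>)" if d: "E \<delta> \<alpha>" for \<delta>
  proof (intro conjI allI impI)
    show "\<exists>p. E p f \<and> kpair E p \<delta> (app E g \<delta>)" using app_ex[OF gfa'[OF d]] fE by blast
  next
    fix y assume "\<exists>p. E p f \<and> kpair E p \<delta> y"
    then obtain p where p: "E p f" "kpair E p \<delta> y" by blast
    show "y = app E g \<delta>"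
    proof (cases "E p g")
      case True then show ?thesis using app_eq[OF gfa'[OF d]] p by blast
    next
      case False
      then have "p = q" using p fE by blast
      then have "\<delta> = \<alpha>" using kpair_inj q p(2) by blast
      then show ?thesis using d nA by blast
    qed
  qed
  have fW: "(\<exists>p. E p f \<and> kpair E p \<alpha> w) \<and> (\<forall>y. (\<exists>p. E p f \<and> kpair E p \<alpha> y) \<longrightarrow> y = w)"
  proof (intro conjI allI impI)
    show "\<exists>p. E p f \<and> kpair E p \<alpha> w" using q fE by blast
  next
    fix y assume "\<exists>p. E p f \<and> kpair E p \<alpha> y"
    then obtain p where p: "E p f" "kpair E p \<alpha> y" by blast
    show "y = w"
    proof (cases "E p g")
      case True
      then obtain \<delta> v where "kpair E p \<delta> v" "E \<delta> \<alpha>" using gpairs by blast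
      then show ?thesis using kpair_inj[OF p(2)] nA by blast
    next
      case False
      then have "p = q" using p fE by blast
      then show ?thesis using kpair_inj q p(2) by blast
    qed
  qed
  have ffun: "is_function E f s"
    unfolding is_function_def
  proof (intro conjI allI impI)
    fix p assume "E p f"
    then show "\<exists>x y. kpair E p x y \<and> E x s" using fE gpairs q sE by blast
  next
    fix x assume "E x s"
    then have "E x \<alpha> \<or> x = \<alpha>" using sE by blast
    then show "\<exists>!y. \<exists>p. E p f \<and> kpair E p x y"
    proof
      assume "E x \<alpha>" then show ?thesis using fA by blast
    next
      assume "x = \<alpha>" then show ?thesis using fW by blast
    qed
  qed
  have fapp1: "app E f \<delta> = app E g \<delta>" if "E \<delta> \<alpha>" for \<delta>
    using fA[OF that] app_eq[OF fun_funat[OF ffun]] sE that by blast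
  have fapp2: "app E f \<alpha> = w"
    using fW app_eq[OF fun_funat[OF ffun]] sE by blast
  have "recfun f s"
    unfolding recfun_def
  proof (intro conjI allI impI ffun)
    fix \<beta> x assume "E \<beta> s"
    then have "E \<beta> \<alpha> \<or> \<beta> = \<alpha>" using sE by blast
    then show "E x (app E f \<beta>) \<longleftrightarrow> Phi \<beta> (app E f) x"
    proof
      assume b: "E \<beta> \<alpha>"
      obtain f' s' where fs': "is_succ E s' \<beta>" "recfun f' s'" using ih b by blast
      have "E x (app E f \<beta>) \<longleftrightarrow> E x (app E f' \<beta>)" using fapp1[OF b] gapp[OF b fs'] by simp
      also have "\<dots> \<longleftrightarrow> Phi \<beta> (app E f') x" using fs'(2) succ_mem[OF fs'(1)] unfolding recfun_def by blast
      also have "\<dots> \<longleftrightarrow> Phi \<beta> (app E f) x"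
      proof (rule loc)
        fix \<gamma> assume "E \<gamma> \<beta>"
        then have "E \<gamma> s'" "E \<gamma> \<alpha>" using fs'(1) inA b unfolding is_succ_def by blast+
        then show "app E f' \<gamma> = app E f \<gamma>" using coh[OF b fs'] fapp1 by simp
      qed
      finally show ?thesis .
    next
      assume b: "\<beta> = \<alpha>"
      have "E x (app E f \<alpha>) \<longleftrightarrow> Phi \<alpha> (app E g) x" using fapp2 wE by simp
      also have "\<dots> \<longleftrightarrow> Phi \<alpha> (app E f) x" by (rule loc) (simp add: fapp1)
      finally show ?thesis using b by simp
    qed
  qed
  then show ?thesis using s by blast
qed


lemma exist:
  assumes "Ord E \<alpha>"
  shows "\<exists>f s. is_succ E s \<alpha> \<and> recfun f s"
proof -
  obtain S where S: "is_succ E S \<alpha>" using succ_ex by blast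
  have trS: "transitive E S" using succ_trans S assms unfolding Ord_def by blast
  define t0 where "t0 = (\<lambda>_::nat. a)"
  define p where "p = fImp (fOrd 0 30) (fWit 0)"
  have "Ord E \<alpha> \<longrightarrow> (\<exists>f s. is_succ E s \<alpha> \<and> recfun f s)"
  proof (rule eps_ind[where S=S and p=p and t=t0 and Q="\<lambda>\<delta>. Ord E \<delta> \<longrightarrow> (\<exists>f s. is_succ E s \<delta> \<and> recfun f s)"])
    show "transitive E S" by fact
    show "fm_jfree p" by (simp add: p_def)
    show "E \<alpha> S" using succ_mem S by blast
  next
    fix x assume "E x S"
    show "sat E id (t0(0:=x)) p \<longleftrightarrow> (Ord E x \<longrightarrow> (\<exists>f s. is_succ E s x \<and> recfun f s))"
    proof (cases "Ord E x")
      case True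
      then have "transitive E x" unfolding Ord_def by blast
      then show ?thesis using sat_fWit[of 0 "t0(0:=x)"] True by (simp add: p_def t0_def)
    qed (simp add: p_def)
  next
    fix x assume "E x S" and ih: "\<And>y. E y x \<Longrightarrow> Ord E y \<longrightarrow> (\<exists>f s. is_succ E s y \<and> recfun f s)"
    show "Ord E x \<longrightarrow> (\<exists>f s. is_succ E s x \<and> recfun f s)"
    proof
      assume ox: "Ord E x"
      show "\<exists>f s. is_succ E s x \<and> recfun f s"
        by (rule step[OF ox]) (use ih Ord_elem[OF ox] in blast)
    qed
  qed
  then show ?thesis using assms by blast
qed

definition rval :: "'a \<Rightarrow> 'a" where "rval \<alpha> = (THE v. \<exists>f s. is_succ E s \<alpha> \<and> recfun f s \<and> v = app E f \<alpha>)"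

lemma rval_ex1: "Ord E \<alpha> \<Longrightarrow> \<exists>!v. \<exists>f s. is_succ E s \<alpha> \<and> recfun f s \<and> v = app E f \<alpha>"
  using exist uniq unfolding Ord_def by metis

end

definition PhiV :: "('a \<Rightarrow> 'a \<Rightarrow> bool) \<Rightarrow> 'a \<Rightarrow> ('a \<Rightarrow> 'a) \<Rightarrow> 'a \<Rightarrow> bool" where
  "PhiV E \<beta> F x \<longleftrightarrow> (\<exists>\<gamma>. E \<gamma> \<beta> \<and> subset E x (F \<gamma>))"
definition "phV = fBex 31 11 (Ex 32 (Conj (Ex 33 (Conj (fMem 33 12) (fKpair 33 31 32 40))) (fSubset 10 32 40)))"

definition PhiA :: "('a \<Rightarrow> 'a \<Rightarrow> bool) \<Rightarrow> 'a \<Rightarrow> 'a \<Rightarrow> ('a \<Rightarrow> 'a) \<Rightarrow> 'a \<Rightarrow> bool" where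
  "PhiA E a \<beta> F x \<longleftrightarrow> E x a \<or> (\<exists>\<gamma>. E \<gamma> \<beta> \<and> x = F \<gamma>)"
definition "phA = fOr (fMem 10 20) (fBex 31 11 (Ex 33 (Conj (fMem 33 12) (fKpair 33 31 10 40))))"

context zf begin

lemma app_in_U2:
  assumes "funat g \<gamma>"
  shows "\<exists>p b. E p g \<and> E b p \<and> E (app E g \<gamma>) b"
proof -
  obtain p where p: "E p g" "kpair E p \<gamma> (app E g \<gamma>)" using app_ex[OF assms] by blast
  then obtain a b where "upair E a \<gamma> \<gamma>" "upair E b \<gamma> (app E g \<gamma>)" "upair E p a b" unfolding kpair_def by blast
  then have "E b p" "E (app E g \<gamma>) b" unfolding upair_def by blast+
  then show ?thesis using p by blast
qed

lemma U2_ex: "\<exists>U. \<forall>p b y. E p g \<longrightarrow> E b p \<longrightarrow> E y b \<longrightarrow> E y U"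
proof -
  obtain U1 where U1: "\<forall>z. E z U1 \<longleftrightarrow> (\<exists>y. E y g \<and> E z y)" using union by blast
  obtain U2 where U2: "\<forall>z. E z U2 \<longleftrightarrow> (\<exists>y. E y U1 \<and> E z y)" using union by blast
  show ?thesis using U1 U2 by blast
qed

lemma zfrec_V: "zfrec E (PhiV E) a phV"
proof (unfold_locales)
  fix \<beta> x and F G :: "'a \<Rightarrow> 'a" assume "\<And>\<gamma>. E \<gamma> \<beta> \<Longrightarrow> F \<gamma> = G \<gamma>"
  then show "PhiV E \<beta> F x = PhiV E \<beta> G x" unfolding PhiV_def by auto
next
  show "fm_jfree phV" by (simp add: phV_def)
next
  fix t :: "nat \<Rightarrow> 'a" assume fa: "\<And>\<gamma>. E \<gamma> (t 11) \<Longrightarrow> funat (t 12) \<gamma>"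
  have "sat E id t phV \<longleftrightarrow> (\<exists>\<gamma>. E \<gamma> (t 11) \<and> (\<exists>y. (\<exists>p. E p (t 12) \<and> kpair E p \<gamma> y) \<and> subset E (t 10) y))"
    by (simp add: phV_def)
  also have "\<dots> \<longleftrightarrow> (\<exists>\<gamma>. E \<gamma> (t 11) \<and> subset E (t 10) (app E (t 12) \<gamma>))"
    using app_ex app_eq fa by metis
  finally show "sat E id t phV = PhiV E (t 11) (app E (t 12)) (t 10)" unfolding PhiV_def .
next
  fix \<beta> g assume fa: "\<And>\<gamma>. E \<gamma> \<beta> \<Longrightarrow> funat g \<gamma>"
  obtain U where U: "\<forall>p b y. E p g \<longrightarrow> E b p \<longrightarrow> E y b \<longrightarrow> E y U" using U2_ex by blast
  obtain U3 where U3: "\<forall>z. E z U3 \<longleftrightarrow> (\<exists>y. E y U \<and> E z y)" using union by blast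
  obtain B where B: "\<forall>z. E z B \<longleftrightarrow> subset E z U3" using power by blast
  have "E x B" if Ph: "PhiV E \<beta> (app E g) x" for x
  proof -
    obtain \<gamma> where "E \<gamma> \<beta>" "subset E x (app E g \<gamma>)" using Ph unfolding PhiV_def by blast
    moreover have "E (app E g \<gamma>) U" using app_in_U2 fa[OF \<open>E \<gamma> \<beta>\<close>] U by blast
    ultimately show ?thesis using B U3 unfolding subset_def by blast
  qed
  then show "\<exists>B. \<forall>x. PhiV E \<beta> (app E g) x \<longrightarrow> E x B" by blast
qed

lemma zfrec_A: "zfrec E (PhiA E a) a phA"
proof (unfold_locales)
  fix \<beta> x and F G :: "'a \<Rightarrow> 'a" assume "\<And>\<gamma>. E \<gamma> \<beta> \<Longrightarrow> F \<gamma> = G \<gamma>"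
  then show "PhiA E a \<beta> F x = PhiA E a \<beta> G x" unfolding PhiA_def by auto
next
  show "fm_jfree phA" by (simp add: phA_def)
next
  fix t :: "nat \<Rightarrow> 'a" assume t20: "t 20 = a" and fa: "\<And>\<gamma>. E \<gamma> (t 11) \<Longrightarrow> funat (t 12) \<gamma>"
  have "sat E id t phA \<longleftrightarrow> E (t 10) a \<or> (\<exists>\<gamma>. E \<gamma> (t 11) \<and> (\<exists>p. E p (t 12) \<and> kpair E p \<gamma> (t 10)))"
    by (simp add: phA_def t20)
  also have "\<dots> \<longleftrightarrow> E (t 10) a \<or> (\<exists>\<gamma>. E \<gamma> (t 11) \<and> t 10 = app E (t 12) \<gamma>)"
    using app_ex app_eq fa by metis
  finally show "sat E id t phA = PhiA E a (t 11) (app E (t 12)) (t 10)" unfolding PhiA_def .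
next
  fix \<beta> g assume fa: "\<And>\<gamma>. E \<gamma> \<beta> \<Longrightarrow> funat g \<gamma>"
  obtain U where U: "\<forall>p b y. E p g \<longrightarrow> E b p \<longrightarrow> E y b \<longrightarrow> E y U" using U2_ex by blast
  obtain B where B: "\<forall>z. E z B \<longleftrightarrow> E z a \<or> E z U" using binunion by blast
  have "E x B" if "PhiA E a \<beta> (app E g) x" for x
  proof -
    have "E x a \<or> (\<exists>\<gamma>. E \<gamma> \<beta> \<and> x = app E g \<gamma>)" using that unfolding PhiA_def by blast
    then show ?thesis
    proof
      assume "E x a" then show ?thesis using B by blast
    next
      assume "\<exists>\<gamma>. E \<gamma> \<beta> \<and> x = app E g \<gamma>"
      then obtain \<gamma> where "E \<gamma> \<beta>" "x = app E g \<gamma>" by blast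
      then show ?thesis using app_in_U2 fa U B by blast
    qed
  qed
  then show "\<exists>B. \<forall>x. PhiA E a \<beta> (app E g) x \<longrightarrow> E x B" by blast
qed

end

context zf begin

lemma isV_iff: "is_V E \<alpha> v \<longleftrightarrow> Ord E \<alpha> \<and> (\<exists>f s. is_succ E s \<alpha> \<and> zfrec.recfun E (PhiV E) f s \<and> v = app E f \<alpha>)"
  unfolding is_V_def zfrec.recfun_def[OF zfrec_V] PhiV_def by blast

lemma isoadd_iff: "is_oadd E a b c \<longleftrightarrow> Ord E a \<and> Ord E b \<and> (\<exists>f s. is_succ E s b \<and> zfrec.recfun E (PhiA E a) f s \<and> c = app E f b)"
  unfolding is_oadd_def zfrec.recfun_def[OF zfrec_A] PhiA_def by blast

lemma V_ex1: "Ord E \<alpha> \<Longrightarrow> \<exists>!v. is_V E \<alpha> v"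
  using zfrec.rval_ex1[OF zfrec_V] isV_iff by simp

lemma oadd_ex1: "Ord E a \<Longrightarrow> Ord E b \<Longrightarrow> \<exists>!c. is_oadd E a b c"
  using zfrec.rval_ex1[OF zfrec_A] isoadd_iff by simp

lemma Vset_is: "Ord E \<alpha> \<Longrightarrow> is_V E \<alpha> (Vset E \<alpha>)"
  unfolding Vset_def using V_ex1 theI' by metis

lemma Vset_eq: "is_V E \<alpha> v \<Longrightarrow> Vset E \<alpha> = v"
  unfolding Vset_def using V_ex1 isV_iff the1_equality by metis

lemma oadd_is: "Ord E a \<Longrightarrow> Ord E b \<Longrightarrow> is_oadd E a b (oadd E a b)"
  unfolding oadd_def using oadd_ex1 theI' by metis


lemma V_contains:
  assumes oa: "Ord E \<alpha>" and d: "E \<delta> \<alpha>"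
  shows "E \<delta> (Vset E \<alpha>)"
proof -
  interpret V: zfrec E "PhiV E" undefined phV by (rule zfrec_V)
  obtain f s where fs: "is_succ E s \<alpha>" "V.recfun f s" "Vset E \<alpha> = app E f \<alpha>"
    using Vset_is[OF oa] isV_iff by blast
  have trs: "transitive E s" using succ_trans fs(1) oa unfolding Ord_def by blast
  have ff: "is_function E f s" using fs(2) unfolding V.recfun_def by blast
  have cl: "E x (app E f \<beta>) \<longleftrightarrow> (\<exists>\<gamma>. E \<gamma> \<beta> \<and> subset E x (app E f \<gamma>))" if "E \<beta> s" for \<beta> x
    using fs(2) that unfolding V.recfun_def PhiV_def by blast
  define t where "t = (\<lambda>_::nat. f)"
  define p where "p = fBall 4 0 (fMemApp 4 1 0 30)"
  have "\<forall>\<delta>. E \<delta> \<alpha> \<longrightarrow> E \<delta> (app E f \<alpha>)"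
  proof (rule eps_ind[where S=s and p=p and t=t and Q="\<lambda>\<beta>. \<forall>\<delta>. E \<delta> \<beta> \<longrightarrow> E \<delta> (app E f \<beta>)"])
    show "transitive E s" by fact
    show "fm_jfree p" by (simp add: p_def)
    show "E \<alpha> s" using succ_mem fs(1) by blast
  next
    fix x assume "E x s"
    then have "funat f x" using fun_funat ff by blast
    then show "sat E id (t(0:=x)) p \<longleftrightarrow> (\<forall>\<delta>. E \<delta> x \<longrightarrow> E \<delta> (app E f x))"
      using memapp_app by (simp add: p_def t_def)
  next
    fix x assume x: "E x s" and ih: "\<And>y. E y x \<Longrightarrow> \<forall>\<delta>. E \<delta> y \<longrightarrow> E \<delta> (app E f y)"
    show "\<forall>\<delta>. E \<delta> x \<longrightarrow> E \<delta> (app E f x)"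
    proof (intro allI impI)
      fix \<delta> assume "E \<delta> x"
      then have "subset E \<delta> (app E f \<delta>)" using ih unfolding subset_def by blast
      then show "E \<delta> (app E f x)" using cl[OF x] \<open>E \<delta> x\<close> by blast
    qed
  qed
  then show ?thesis using d fs(3) by simp
qed

lemma oadd_props:
  assumes oa: "Ord E a" and ob: "Ord E b"
  shows "Ord E (oadd E a b)" and "(\<exists>x. E x b) \<Longrightarrow> E a (oadd E a b)"
proof -
  interpret A: zfrec E "PhiA E a" a phA by (rule zfrec_A)
  obtain f s where fs: "is_succ E s b" "A.recfun f s" "oadd E a b = app E f b"
    using oadd_is[OF oa ob] isoadd_iff by blast
  have os: "Ord E s" using succ_Ord fs(1) ob by blast
  have trs: "transitive E s" using os unfolding Ord_def by blast
  have cl: "E x (app E f \<beta>) \<longleftrightarrow> E x a \<or> (\<exists>\<gamma>. E \<gamma> \<beta> \<and> x = app E f \<gamma>)" if "E \<beta> s" for \<beta> x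
    using fs(2) that unfolding A.recfun_def PhiA_def by blast
  have trA: "transitive E a" using oa unfolding Ord_def by blast
  have sub: "subset E (app E f \<gamma>) (app E f \<beta>)" if "E \<beta> s" "E \<gamma> \<beta>" for \<beta> \<gamma>
  proof -
    have gs: "E \<gamma> s" using trs that unfolding transitive_def subset_def by blast
    have trb: "transitive E \<beta>" using os that(1) unfolding Ord_def by blast
    show ?thesis unfolding subset_def
    proof (intro allI impI)
      fix z assume "E z (app E f \<gamma>)"
      then have "E z a \<or> (\<exists>\<delta>. E \<delta> \<gamma> \<and> z = app E f \<delta>)" using cl[OF gs] by blast
      moreover have "E \<delta> \<beta>" if "E \<delta> \<gamma>" for \<delta> using trb that \<open>E \<gamma> \<beta>\<close> unfolding transitive_def subset_def by blast
      ultimately show "E z (app E f \<beta>)" using cl[OF that(1)] by blast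
    qed
  qed
  have trf: "transitive E (app E f \<beta>)" if bs: "E \<beta> s" for \<beta>
    unfolding transitive_def subset_def
  proof (intro allI impI)
    fix y z assume y: "E y (app E f \<beta>)" and z: "E z y"
    from y have "E y a \<or> (\<exists>\<gamma>. E \<gamma> \<beta> \<and> y = app E f \<gamma>)" using cl[OF bs] by blast
    then show "E z (app E f \<beta>)"
    proof
      assume "E y a" then have "E z a" using trA z unfolding transitive_def subset_def by blast
      then show ?thesis using cl[OF bs] by blast
    next
      assume "\<exists>\<gamma>. E \<gamma> \<beta> \<and> y = app E f \<gamma>"
      then show ?thesis using sub[OF bs] z unfolding subset_def by blast
    qed
  qed
  have "Ord E (app E f b)"
    unfolding Ord_def
  proof (intro conjI allI impI)
    have bs: "E b s" using succ_mem fs(1) by blast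
    show "transitive E (app E f b)" using trf[OF bs] .
    fix x assume "E x (app E f b)"
    then have "E x a \<or> (\<exists>\<gamma>. E \<gamma> b \<and> x = app E f \<gamma>)" using cl[OF bs] by blast
    then show "transitive E x"
    proof
      assume "E x a" then show ?thesis using oa unfolding Ord_def by blast
    next
      assume "\<exists>\<gamma>. E \<gamma> b \<and> x = app E f \<gamma>"
      then obtain \<gamma> where "E \<gamma> b" "x = app E f \<gamma>" by blast
      moreover have "E \<gamma> s" using \<open>E \<gamma> b\<close> fs(1) unfolding is_succ_def by blast
      ultimately show ?thesis using trf by blast
    qed
  qed
  then show "Ord E (oadd E a b)" using fs(3) by simp
  assume "\<exists>x. E x b"
  then obtain x where "E x b" by blast
  then obtain m where m: "E m b" "\<forall>z. E z m \<longrightarrow> \<not> E z b" using found by blast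
  have trB: "transitive E b" using ob unfolding Ord_def by blast
  have me: "\<not> E z m" for z using m trB unfolding transitive_def subset_def by blast
  have bs: "E b s" using succ_mem fs(1) by blast
  have ms: "E m s" using m(1) fs(1) unfolding is_succ_def by blast
  have "app E f m = a" using cl[OF ms] me by (intro extn) blast
  moreover have "E (app E f m) (app E f b)" using cl[OF bs] m(1) by blast
  ultimately show "E a (oadd E a b)" using fs(3) by simp
qed

end

lemma evalt_jfree: "trm_jfree u \<Longrightarrow> evalt j s u = evalt j' s u"
  by (cases u) auto

lemma satD_jindep: "fm_jfree p \<Longrightarrow> satD E j D s p = satD E j' D s p"
proof (induction p arbitrary: s)
  case (Mem a b) then show ?case using evalt_jfree by (metis fm_jfree.simps(1) satD.simps(1))
next
  case (Eq a b) then show ?case using evalt_jfree by (metis fm_jfree.simps(2) satD.simps(2))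
qed auto

fun tvars :: "trm \<Rightarrow> nat" where
  "tvars (Var n) = n" | "tvars (J u) = tvars u"

fun mv :: "fm \<Rightarrow> nat" where
  "mv (Mem a b) = max (tvars a) (tvars b)"
| "mv (Eq a b) = max (tvars a) (tvars b)"
| "mv (Neg p) = mv p"
| "mv (Conj p q) = max (mv p) (mv q)"
| "mv (Ex x p) = max x (mv p)"

lemma evalt_agree: "(\<And>i. i \<le> tvars u \<Longrightarrow> s i = s' i) \<Longrightarrow> evalt j s u = evalt j s' u"
  by (induction u) auto

lemma satD_agree: "(\<And>i. i \<le> mv p \<Longrightarrow> s i = s' i) \<Longrightarrow> satD E j D s p = satD E j D s' p"
proof (induction p arbitrary: s s')
  case (Mem a b)
  have "evalt j s a = evalt j s' a" by (rule evalt_agree, rule Mem.prems) simp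
  moreover have "evalt j s b = evalt j s' b" by (rule evalt_agree, rule Mem.prems) simp
  ultimately show ?case by simp
next
  case (Eq a b)
  have "evalt j s a = evalt j s' a" by (rule evalt_agree, rule Eq.prems) simp
  moreover have "evalt j s b = evalt j s' b" by (rule evalt_agree, rule Eq.prems) simp
  ultimately show ?case by simp
next
  case (Neg p)
  have "satD E j D s p = satD E j D s' p" by (rule Neg.IH, rule Neg.prems) simp
  then show ?case by simp
next
  case (Conj p q)
  have "satD E j D s p = satD E j D s' p" by (rule Conj.IH(1), rule Conj.prems) simp
  moreover have "satD E j D s q = satD E j D s' q" by (rule Conj.IH(2), rule Conj.prems) simp
  ultimately show ?case by simp
next
  case (Ex x p)
  have "satD E j D (s(x:=a)) p = satD E j D (s'(x:=a)) p" for a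
  proof (rule Ex.IH)
    fix i assume "i \<le> mv p"
    then show "(s(x:=a)) i = (s'(x:=a)) i" using Ex.prems[of i] by simp
  qed
  then show ?case by simp
qed

fun rel :: "nat \<Rightarrow> fm \<Rightarrow> fm" where
  "rel a (Mem u v) = Mem u v"
| "rel a (Eq u v) = Eq u v"
| "rel a (Neg p) = Neg (rel a p)"
| "rel a (Conj p q) = Conj (rel a p) (rel a q)"
| "rel a (Ex x p) = Ex x (Conj (Mem (Var x) (Var a)) (rel a p))"

lemma rel_jfree: "fm_jfree (rel a p) = fm_jfree p"
  by (induction p) auto

lemma sat_rel: "mv p < a \<Longrightarrow> sat E j t (rel a p) = satD E j (\<lambda>x. E x (t a)) t p"
proof (induction p arbitrary: t)
  case (Ex x p)
  have xa: "x \<noteq> a" using Ex.prems by simp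
  have mp: "mv p < a" using Ex.prems by simp
  have "sat E j (t(x:=b)) (rel a p) = satD E j (\<lambda>y. E y (t a)) (t(x:=b)) p" for b
  proof -
    have ta: "(t(x:=b)) a = t a" using xa by simp
    have "sat E j (t(x:=b)) (rel a p) = satD E j (\<lambda>y. E y ((t(x:=b)) a)) (t(x:=b)) p" using mp by (rule Ex.IH)
    then show ?thesis by (simp only: ta)
  qed
  then show ?case using xa by (simp add: sat_def)
qed (auto simp: sat_def)

locale wa = zf E for E :: "'a \<Rightarrow> 'a \<Rightarrow> bool" + fixes j :: "'a \<Rightarrow> 'a"
  assumes WA: "WA0 E j"
begin

lemma elem1: "fm_jfree p \<Longrightarrow> sat E j s p \<longleftrightarrow> sat E j (j \<circ> s) p"
  using WA unfolding WA0_def by blast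

lemma d0sep: "delta0 p \<Longrightarrow> \<exists>b. \<forall>x. E x b \<longleftrightarrow> E x a \<and> sat E j (s(0:=x)) p"
  using WA unfolding WA0_def by blast

lemma elemn: "fm_jfree p \<Longrightarrow> sat E j s p \<longleftrightarrow> sat E j ((j^^n) \<circ> s) p"
proof (induction n)
  case 0 then show ?case by simp
next
  case (Suc n)
  have "sat E j s p = sat E j ((j^^n) \<circ> s) p" by (rule Suc.IH[OF Suc.prems])
  also have "\<dots> = sat E j (j \<circ> ((j^^n) \<circ> s)) p" using elem1 Suc.prems by blast
  also have "j \<circ> ((j^^n) \<circ> s) = (j^^Suc n) \<circ> s" by (rule ext) simp
  finally show ?case .
qed

lemma tr_mem: "E x y \<Longrightarrow> E ((j^^n) x) ((j^^n) y)"
proof -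
  assume h: "E x y"
  show ?thesis using elemn[where p="fMem 0 1" and n=n and s="(\<lambda>_. x)(1:=y)"] h by simp
qed

lemma tr_Ord: "Ord E x \<Longrightarrow> Ord E ((j^^n) x)"
proof -
  assume h: "Ord E x"
  show ?thesis using elemn[where p="fOrd 0 30" and n=n and s="\<lambda>_. x"] h by simp
qed

definition "fisV = Conj (fOrd 0 30) (zfrec.fWitV phV 0 1)"

lemma fisV_jfree: "fm_jfree fisV"
  using zfrec.jf_rec[OF zfrec_V] unfolding fisV_def by simp

lemma sat_fisV: "sat E j t fisV \<longleftrightarrow> is_V E (t 0) (t 1)"
proof -
  interpret V: zfrec E "PhiV E" "t 20" phV by (rule zfrec_V)
  have "sat E j t fisV \<longleftrightarrow> sat E id t fisV" using satD_jindep[OF fisV_jfree] by (simp add: sat_def)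
  also have "\<dots> \<longleftrightarrow> Ord E (t 0) \<and> sat E id t (V.fWitV 0 1)" by (simp add: fisV_def)
  also have "\<dots> \<longleftrightarrow> is_V E (t 0) (t 1)"
  proof (cases "Ord E (t 0)")
    case True
    then have "transitive E (t 0)" unfolding Ord_def by blast
    then show ?thesis using V.sat_fWitV[of 0 1 t] True isV_iff by simp
  qed (simp add: isV_iff)
  finally show ?thesis .
qed

lemma tr_isV: "is_V E x v \<Longrightarrow> is_V E ((j^^n) x) ((j^^n) v)"
proof -
  assume h: "is_V E x v"
  have "sat E j ((\<lambda>_. x)(1:=v)) fisV" using h sat_fisV by simp
  then have "sat E j ((j^^n) \<circ> ((\<lambda>_. x)(1:=v))) fisV" using elemn fisV_jfree by blast
  then show ?thesis unfolding sat_fisV by simp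
qed

end

fun Jn :: "nat \<Rightarrow> trm \<Rightarrow> trm" where
  "Jn 0 u = u" | "Jn (Suc n) u = J (Jn n u)"

lemma evalt_Jn[simp]: "evalt j s (Jn n u) = (j^^n) (evalt j s u)"
  by (induction n) auto

lemma tvars_Jn[simp]: "tvars (Jn n u) = tvars u"
  by (induction n) auto

lemma delta0_Jn: "delta0 (Mem (Jn n u) v)" "delta0 (Eq w (Jn n u))" by simp_all

definition "dUp z x y v = Conj (Neg (Ex v (Conj (Mem (Var v) (Var z)) (Neg (Neg (Conj (Neg (Eq (Var v) x)) (Neg (Eq (Var v) y))))))))
   (Conj (Mem x (Var z)) (Mem y (Var z)))"

lemma delta0_dUp: "v \<noteq> z \<Longrightarrow> delta0 (dUp z x y v)"
  by (simp add: dUp_def)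

lemma sat_dUp:
  assumes "z < v" "tvars x < v" "tvars y < v"
  shows "sat E j s (dUp z x y v) \<longleftrightarrow> upair E (s z) (evalt j s x) (evalt j s y)"
proof -
  have ex: "evalt j (s(v:=a)) x = evalt j s x" for a by (rule evalt_agree) (use assms in auto)
  have ey: "evalt j (s(v:=a)) y = evalt j s y" for a by (rule evalt_agree) (use assms in auto)
  have "sat E j s (dUp z x y v) \<longleftrightarrow> (\<forall>a. E a (s z) \<longrightarrow> a = evalt j s x \<or> a = evalt j s y) \<and> E (evalt j s x) (s z) \<and> E (evalt j s y) (s z)"
    using assms ex ey by (auto simp: dUp_def)
  also have "\<dots> \<longleftrightarrow> upair E (s z) (evalt j s x) (evalt j s y)" unfolding upair_def by blast
  finally show ?thesis .
qed

context wa begin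

definition "phiK n = Ex 2 (Conj (Mem (Var 2) (Var 1)) (Ex 3 (Conj (Mem (Var 3) (Var 0)) (Ex 4 (Conj (Mem (Var 4) (Var 0))
   (Conj (dUp 3 (Var 2) (Var 2) 5) (Conj (dUp 4 (Var 2) (Jn n (Var 2)) 5) (dUp 0 (Var 3) (Var 4) 5))))))))"

lemma delta0_phiK: "delta0 (phiK n)"
  by (simp add: phiK_def delta0_dUp)

lemma sat_phiK: "sat E j (t(0:=z)) (phiK n) \<longleftrightarrow> (\<exists>x. E x (t 1) \<and> kpair E z x ((j^^n) x))"
proof -
  have "sat E j (t(0:=z)) (phiK n) \<longleftrightarrow> (\<exists>x. E x (t 1) \<and> (\<exists>u. E u z \<and> (\<exists>w. E w z \<and>
     upair E u x x \<and> upair E w x ((j^^n) x) \<and> upair E z u w)))"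
    by (simp add: phiK_def sat_dUp)
  also have "\<dots> \<longleftrightarrow> (\<exists>x. E x (t 1) \<and> kpair E z x ((j^^n) x))"
    unfolding kpair_def upair_def by blast
  finally show ?thesis .
qed

lemma emb_fun:
  "\<exists>k. is_function E k A \<and> (\<forall>x. E x A \<longrightarrow> app E k x = (j^^n) x)"
proof -
  define jn where "jn = j^^n"
  obtain U where U: "\<forall>z. E z U \<longleftrightarrow> E z A \<or> E z (jn A)" using binunion by blast
  obtain P1 where P1: "\<forall>z. E z P1 \<longleftrightarrow> subset E z U" using power by blast
  obtain C where C: "\<forall>z. E z C \<longleftrightarrow> subset E z P1" using power by blast
  have inC: "E z C" if x: "E x A" and kp: "kpair E z x (jn x)" for x z
  proof -
    obtain u w where uw: "upair E u x x" "upair E w x (jn x)" "upair E z u w" using kp unfolding kpair_def by blast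
    have jx: "E (jn x) (jn A)" using tr_mem x unfolding jn_def by blast
    have xU: "E x U" using U x by blast
    have jU: "E (jn x) U" using U jx by blast
    have "subset E u U" unfolding subset_def
    proof (intro allI impI)
      fix e assume "E e u" then have "e = x" using uw(1) unfolding upair_def by blast
      then show "E e U" using xU by simp
    qed
    then have uP: "E u P1" using P1 by blast
    have "subset E w U" unfolding subset_def
    proof (intro allI impI)
      fix e assume "E e w" then have "e = x \<or> e = jn x" using uw(2) unfolding upair_def by blast
      then show "E e U" using xU jU by blast
    qed
    then have wP: "E w P1" using P1 by blast
    have "subset E z P1" unfolding subset_def
    proof (intro allI impI)
      fix e assume "E e z" then have "e = u \<or> e = w" using uw(3) unfolding upair_def by blast
      then show "E e P1" using uP wP by blast
    qed
    then show ?thesis using C by blast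
  qed
  define t where "t = (\<lambda>_::nat. A)"
  obtain k where k0: "\<forall>z. E z k \<longleftrightarrow> E z C \<and> sat E j (t(0:=z)) (phiK n)"
    using d0sep[OF delta0_phiK] by blast
  have k: "E z k \<longleftrightarrow> (\<exists>x. E x A \<and> kpair E z x (jn x))" for z
    using k0 sat_phiK[of t z n] inC unfolding t_def jn_def by auto
  have kf: "is_function E k A" unfolding is_function_def
  proof (intro conjI allI impI)
    fix p assume "E p k" then show "\<exists>x y. kpair E p x y \<and> E x A" using k by blast
  next
    fix x assume x: "E x A"
    obtain p where p: "kpair E p x (jn x)" using kpair_ex by blast
    have "E p k" using k x p by blast
    moreover have "y = jn x" if ex: "\<exists>p. E p k \<and> kpair E p x y" for y
    proof -
      obtain p' where p': "E p' k" "kpair E p' x y" using ex by blast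
      then obtain x' where "kpair E p' x' (jn x')" using k by blast
      then show ?thesis using kpair_inj[OF p'(2)] by blast
    qed
    ultimately show "\<exists>!y. \<exists>p. E p k \<and> kpair E p x y" using p by blast
  qed
  have "app E k x = jn x" if x: "E x A" for x
  proof -
    obtain p where p: "kpair E p x (jn x)" using kpair_ex by blast
    have "E p k" using k x p by blast
    then show ?thesis using app_eq[OF fun_funat[OF kf x]] p by blast
  qed
  then show ?thesis using kf unfolding jn_def by blast
qed

lemma emb_elem:
  assumes kf: "is_function E k A" and ka: "\<forall>x. E x A \<longrightarrow> app E k x = (j^^n) x"
  shows "elem_emb E k A ((j^^n) A)"
  unfolding elem_emb_def fun_into_def
proof (intro conjI allI impI kf)
  fix x assume "E x A" then show "E (app E k x) ((j^^n) A)" using ka tr_mem by simp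
next
  fix p and s :: "nat \<Rightarrow> 'a" assume jf: "fm_jfree p" and sA: "\<forall>i. E (s i) A"
  define a where "a = Suc (mv p)"
  define t where "t = s(a:=A)"
  have ma: "mv p < a" unfolding a_def by simp
  have ag: "t i = s i" if "i \<le> mv p" for i using that ma unfolding t_def by auto
  have ag2: "((j^^n) \<circ> t) i = (j^^n) (s i)" if "i \<le> mv p" for i using ag[OF that] by simp
  have "satD E id (\<lambda>x. E x A) s p \<longleftrightarrow> satD E j (\<lambda>x. E x A) s p" using satD_jindep[OF jf] by blast
  also have "\<dots> \<longleftrightarrow> satD E j (\<lambda>x. E x (t a)) t p" using satD_agree[of p t s] ag by (simp add: t_def)
  also have "\<dots> \<longleftrightarrow> sat E j t (rel a p)" by (rule sat_rel[OF ma, symmetric])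
  also have "\<dots> \<longleftrightarrow> sat E j ((j^^n) \<circ> t) (rel a p)" using elemn rel_jfree jf by blast
  also have "\<dots> \<longleftrightarrow> satD E j (\<lambda>x. E x (((j^^n) \<circ> t) a)) ((j^^n) \<circ> t) p" by (rule sat_rel[OF ma])
  also have "\<dots> \<longleftrightarrow> satD E j (\<lambda>x. E x ((j^^n) A)) (\<lambda>i. (j^^n) (s i)) p"
    using satD_agree[of p "(j^^n) \<circ> t" "\<lambda>i. (j^^n) (s i)"] ag2 by (simp add: t_def)
  also have "\<dots> \<longleftrightarrow> satD E id (\<lambda>x. E x ((j^^n) A)) (\<lambda>i. app E k (s i)) p"
    using satD_jindep[OF jf] ka sA by simp
  finally show "satD E id (\<lambda>x. E x A) s p \<longleftrightarrow> satD E id (\<lambda>x. E x ((j^^n) A)) (\<lambda>i. app E k (s i)) p" .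
qed

end

theorem mainTheorem18:
  fixes E :: "'a \<Rightarrow> 'a \<Rightarrow> bool" and j :: "'a \<Rightarrow> 'a" and \<kappa> :: 'a
  assumes "ZF E" and "WA0 E j" and "is_crit E j \<kappa>"
    and "\<forall>\<alpha>. Ord E \<alpha> \<longrightarrow> (\<exists>n. E \<alpha> ((j ^^ n) \<kappa>))"
  shows "extendible E \<kappa>"
proof -
  interpret wa E j using assms(1,2) unfolding wa_def wa_axioms_def zf_def by blast
  have ok: "Ord E \<kappa>" and jk: "j \<kappa> \<noteq> \<kappa>" and fix1: "\<And>\<gamma>. E \<gamma> \<kappa> \<Longrightarrow> j \<gamma> = \<gamma>"
    using assms(3) unfolding is_crit_def by blast+
  have fixn: "(j^^n) \<gamma> = \<gamma>" if "E \<gamma> \<kappa>" for \<gamma> n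
    by (induction n) (simp_all add: fix1[OF that])
  show ?thesis unfolding extendible_def
  proof (intro allI impI)
    fix \<eta> assume h: "Ord E \<eta> \<and> (\<exists>x. E x \<eta>)"
    then have oe: "Ord E \<eta>" and ne: "\<exists>x. E x \<eta>" by blast+
    have "\<exists>n. E \<eta> ((j^^n) \<kappa>) \<and> (j^^n) \<kappa> \<noteq> \<kappa>"
    proof -
      obtain n0 where n0: "E \<eta> ((j^^n0) \<kappa>)" using assms(4) oe by blast
      show ?thesis
      proof (cases "(j^^n0) \<kappa> = \<kappa>")
        case False then show ?thesis using n0 by blast
      next
        case True
        then have ek: "E \<eta> \<kappa>" using n0 by simp
        obtain m where m: "E \<kappa> ((j^^m) \<kappa>)" using assms(4) ok by blast
        have "(j^^m) \<kappa> \<noteq> \<kappa>" using m no_self by metis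
        moreover have "Ord E ((j^^m) \<kappa>)" using tr_Ord ok by blast
        then have "E \<eta> ((j^^m) \<kappa>)" using m ek unfolding Ord_def transitive_def subset_def by blast
        ultimately show ?thesis by blast
      qed
    qed
    then obtain n where n: "E \<eta> ((j^^n) \<kappa>)" "(j^^n) \<kappa> \<noteq> \<kappa>" by blast
    define \<beta> where "\<beta> = oadd E \<kappa> \<eta>"
    have ob: "Ord E \<beta>" and kb: "E \<kappa> \<beta>" using oadd_props[OF ok oe] ne unfolding \<beta>_def by blast+
    define A where "A = Vset E \<beta>"
    have isA: "is_V E \<beta> A" using Vset_is[OF ob] unfolding A_def .
    have kA: "E \<kappa> A" using V_contains[OF ob kb] unfolding A_def .
    have gA: "E \<gamma> A" if "E \<gamma> \<kappa>" for \<gamma>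
    proof -
      have "E \<gamma> \<beta>" using ob kb that unfolding Ord_def transitive_def subset_def by blast
      then show ?thesis using V_contains[OF ob] unfolding A_def by blast
    qed
    define \<theta> where "\<theta> = (j^^n) \<beta>"
    have ot: "Ord E \<theta>" using tr_Ord[OF ob] unfolding \<theta>_def .
    have vt: "Vset E \<theta> = (j^^n) A" using Vset_eq[OF tr_isV[OF isA]] unfolding \<theta>_def .
    obtain k where kf: "is_function E k A" and ka: "\<forall>x. E x A \<longrightarrow> app E k x = (j^^n) x"
      using emb_fun by blast
    have ee: "elem_emb E k (Vset E \<beta>) (Vset E \<theta>)"
      using emb_elem[OF kf ka] unfolding vt A_def .
    have ce: "crit_emb E k \<kappa>" unfolding crit_emb_def
      using ok ka kA n(2) gA fixn by auto
    have "E \<eta> (app E k \<kappa>)" using ka kA n(1) by simp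
    then show "\<exists>k \<theta>. Ord E \<theta> \<and> elem_emb E k (Vset E (oadd E \<kappa> \<eta>)) (Vset E \<theta>) \<and> crit_emb E k \<kappa> \<and> E \<eta> (app E k \<kappa>)"
      using ot ee ce unfolding \<beta>_def by blast
  qed
qed

end
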